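(* Fix a valid ILA model and a secret parameter $\mathsf{sp}\in\mathcal{SP}$. Suppose $\mathsf{topub}(\mathsf{sp});\Gamma\vdash e:\tau$ and $\mathsf{sp};\Gamma\vDash\gamma$. Then there are values $v$ and $v_{\mathsf{msg}}$ with $\langle\gamma,e\rangle\Downarrow v$ and $\langle\mathsf{interp}^{\mathsf{sp}}_\Gamma(\gamma),e\rangle\Downarrow^{\mathsf{sp}}_{\mathsf{msg}}v_{\mathsf{msg}}$ such that $\mathsf{interp}^{\mathsf{sp}}_{\mathsf{sort}(v)}(v)=v_{\mathsf{msg}}$.
   Context: An ILA model consists of: sets $\mathcal{PP}$ (public parameters) and $\mathcal{SP}$ (secret parameters) with a map $\mathsf{topub}:\mathcal{SP}\to\mathcal{PP}$; for each sort $s\in\{\mathsf{msg},\mathsf{plain},\mathsf{cipher}\}$ a carrier set $[\![s]\!]$ (the sort of a value $v$, written $\mathsf{sort}(v)$, is the $s$ with $v\in[\![s]\!]$) and a partially ordered set $(B_s,\le_s)$ of bounds; maps $|\cdot|^{\mathsf{pp}}_{\mathsf{msg}}:[\![\mathsf{msg}]\!]\to B_{\mathsf{msg}}$, $|\cdot|^{\mathsf{pp}}_{\mathsf{plain}}:[\![\mathsf{plain}]\!]\to B_{\mathsf{plain}}$ for $\mathsf{pp}\in\mathcal{PP}$, and $|\cdot|^{\mathsf{sp}}_{\mathsf{cipher}}:[\![\mathsf{cipher}]\!]\to B_{\mathsf{cipher}}$ for $\mathsf{sp}\in\mathcal{SP}$ (for $s\in\{\mathsf{msg},\mathsf{plain}\}$,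 $|\cdot|^{\mathsf{sp}}_s$ means $|\cdot|^{\mathsf{topub}(\mathsf{sp})}_s$); interpretation maps $\mathsf{interp}^{\mathsf{pp}}_{\mathsf{plain}}:[\![\mathsf{plain}]\!]\to[\![\mathsf{msg}]\!]$ (decoding), $\mathsf{interp}^{\mathsf{sp}}_{\mathsf{cipher}}:[\![\mathsf{cipher}]\!]\to[\![\mathsf{msg}]\!]$ (decryption), with $\mathsf{interp}^{\mathsf{pp}}_{\mathsf{msg}}$ the identity and $\mathsf{interp}^{\mathsf{sp}}_s:=\mathsf{interp}^{\mathsf{topub}(\mathsf{sp})}_s$ for $s\in\{\mathsf{msg},\mathsf{plain}\}$; and a set of operations, each $\mathsf{op}$ having an arity $s_1,\dots,s_n\to s$ and equipped with a total function $[\![\mathsf{op}]\!]:\prod_i[\![s_i]\!]\to[\![s]\!]$, a partial function $[\![\mathsf{op}]\!]^{\mathsf{pp}}_{\mathsf{bnd}}:\prod_i B_{s_i}\rightharpoonup B_s$ for each $\mathsf{pp}$, and a function $[\![\mathsf{op}]\!]_{\mathsf{msg}}:[\![\mathsf{msg}]\!]^n\to[\![\mathsf{msg}]\!]$. The model is valid if (Commutativity) for all $\mathsf{sp}$, all $\mathsf{op}:\vec s_i\to s$ and all $v_i\in[\![s_i]\!]$, if $[\![\mathsf{op}]\!]^{\mathsf{topub}(\mathsf{sp})}_{\mathsf{bnd}}(|v_1|^{\mathsf{sp}}_{s_1},\dots)=b$ is defined then $|[\![\mathsf{op}]\!](\vec v_i)|^{\mathsf{sp}}_s\le_s b$ and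 $\mathsf{interp}^{\mathsf{sp}}_s([\![\mathsf{op}]\!](\vec v_i))=[\![\mathsf{op}]\!]_{\mathsf{msg}}(\mathsf{interp}^{\mathsf{sp}}_{s_1}(v_1),\dots)$; and (Downwards Closed) if $[\![\mathsf{op}]\!]^{\mathsf{topub}(\mathsf{sp})}_{\mathsf{bnd}}(\vec b_i)=b$ is defined and $b_i'\le_{s_i}b_i$ for all $i$, then $[\![\mathsf{op}]\!]^{\mathsf{topub}(\mathsf{sp})}_{\mathsf{bnd}}(\vec b_i')=b'$ is defined with $b'\le_s b$. Expressions: $e::=x\mid v\mid\mathsf{op}(e_1,\dots,e_n)$ with $v\in[\![s]\!]$, $s\in\{\mathsf{msg},\mathsf{plain}\}$. A substitution $\gamma$ maps variables to values in $[\![\mathsf{msg}]\!]\cup[\![\mathsf{plain}]\!]\cup[\![\mathsf{cipher}]\!]$. Ordinary evaluation $\langle\gamma,e\rangle\Downarrow v$: $\langle\gamma,x\rangle\Downarrow\gamma(x)$; $\langle\gamma,v\rangle\Downarrow v$; if $\mathsf{op}:\vec s_i\to s$ and $\langle\gamma,e_i\rangle\Downarrow v_i\in[\![s_i]\!]$ for all $i$, then $\langle\gamma,\mathsf{op}(\vec e_i)\rangle\Downarrow[\![\mathsf{op}]\!](\vec v_i)$. Cleartext evaluation $\langle\gamma,e\rangle\Downarrow^{\mathsf{sp}}_{\mathsf{msg}}v$ (for substitutions into $[\![\mathsf{msg}]\!]$): $\langle\gamma,x\rangle\Downarrow^{\mathsf{sp}}_{\mathsf{msg}}\gamma(x)$;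 for $v\in[\![s]\!]$, $\langle\gamma,v\rangle\Downarrow^{\mathsf{sp}}_{\mathsf{msg}}\mathsf{interp}^{\mathsf{sp}}_s(v)$; if $\mathsf{op}:\vec s_i\to s$ and $\langle\gamma,e_i\rangle\Downarrow^{\mathsf{sp}}_{\mathsf{msg}}v_i$ for all $i$, then $\langle\gamma,\mathsf{op}(\vec e_i)\rangle\Downarrow^{\mathsf{sp}}_{\mathsf{msg}}[\![\mathsf{op}]\!]_{\mathsf{msg}}(\vec v_i)$. Types are $s\ \alpha$ with $\alpha\in B_s$; $|s\ \alpha|=\alpha$, $\mathsf{sort}(s\ \alpha)=s$; $s\ \alpha\le s\ \alpha'$ iff $\alpha\le_s\alpha'$. A context $\Gamma$ is a finite map from variables to types. Typing $\mathsf{pp};\Gamma\vdash e:\tau$: if $x:\tau\in\Gamma$ then $\mathsf{pp};\Gamma\vdash x:\tau$; if $\mathsf{pp};\Gamma\vdash e:\tau$ and $\tau\le\tau'$ then $\mathsf{pp};\Gamma\vdash e:\tau'$; if $\mathsf{sort}(v)=s$ then $\mathsf{pp};\Gamma\vdash v:s\ |v|^{\mathsf{pp}}_s$; if $\mathsf{op}:\vec s_i\to s$, $\mathsf{pp};\Gamma\vdash e_i:\tau_i$ with $\mathsf{sort}(\tau_i)=s_i$, and $[\![\mathsf{op}]\!]^{\mathsf{pp}}_{\mathsf{bnd}}(|\tau_1|,\dots,|\tau_n|)=\alpha$ is defined, then $\mathsf{pp};\Gamma\vdash\mathsf{op}(\vec e_i):s\ \alpha$. Semantic types: $[\![s\ \alpha]\!]^{\mathsf{sp}}=\{v\in[\![s]\!]\mid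 |v|^{\mathsf{sp}}_s\le_s\alpha\}$. $\mathsf{sp};\Gamma\vDash\gamma$ means: for every $x$ in the domain of $\Gamma$, $x$ is in the domain of $\gamma$ and $\gamma(x)\in[\![\Gamma(x)]\!]^{\mathsf{sp}}$. For such $\gamma$, $\mathsf{interp}^{\mathsf{sp}}_\Gamma(\gamma)$ is the substitution $\{x\mapsto\mathsf{interp}^{\mathsf{sp}}_{\mathsf{sort}(\Gamma(x))}(\gamma(x))\}$ over the variables $x$ of $\Gamma$. *)

theory Defs
  imports Main
begin

datatype sort = SMsg | SPlain | SCipher

datatype ('m, 'p, 'c) val = VMsg 'm | VPlain 'p | VCipher 'c

fun sort_of_val :: "('m, 'p, 'c) val \<Rightarrow> sort" where
  "sort_of_val (VMsg _) = SMsg"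
| "sort_of_val (VPlain _) = SPlain"
| "sort_of_val (VCipher _) = SCipher"

text \<open>Bounds, tagged with their sort. A type \<open>s \<alpha>\<close> (with \<open>\<alpha> \<in> B_s\<close>) is exactly such a
  tagged bound; \<open>|s \<alpha>| = \<alpha>\<close>.\<close>
datatype ('bm, 'bp, 'bc) bnd = BMsg 'bm | BPlain 'bp | BCipher 'bc

fun sort_of_bnd :: "('bm, 'bp, 'bc) bnd \<Rightarrow> sort" where
  "sort_of_bnd (BMsg _) = SMsg"
| "sort_of_bnd (BPlain _) = SPlain"
| "sort_of_bnd (BCipher _) = SCipher"

record ('pp, 'sp, 'm, 'p, 'c, 'bm, 'bp, 'bc, 'op) ila =
  topub :: "'sp \<Rightarrow> 'pp"
  le_msg :: "'bm \<Rightarrow> 'bm \<Rightarrow> bool"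
  le_plain :: "'bp \<Rightarrow> 'bp \<Rightarrow> bool"
  le_cipher :: "'bc \<Rightarrow> 'bc \<Rightarrow> bool"
  size_msg :: "'pp \<Rightarrow> 'm \<Rightarrow> 'bm"
  size_plain :: "'pp \<Rightarrow> 'p \<Rightarrow> 'bp"
  size_cipher :: "'sp \<Rightarrow> 'c \<Rightarrow> 'bc"
  interp_plain :: "'pp \<Rightarrow> 'p \<Rightarrow> 'm"
  interp_cipher :: "'sp \<Rightarrow> 'c \<Rightarrow> 'm"
  arity :: "'op \<Rightarrow> sort list \<times> sort"
  op_sem :: "'op \<Rightarrow> ('m, 'p, 'c) val list \<Rightarrow> ('m, 'p, 'c) val"
  op_bnd :: "'pp \<Rightarrow> 'op \<Rightarrow> ('bm, 'bp, 'bc) bnd list \<Rightarrow> ('bm, 'bp, 'bc) bnd option"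
  op_msg :: "'op \<Rightarrow> 'm list \<Rightarrow> 'm"

fun le_bnd :: "('pp, 'sp, 'm, 'p, 'c, 'bm, 'bp, 'bc, 'op) ila \<Rightarrow>
    ('bm, 'bp, 'bc) bnd \<Rightarrow> ('bm, 'bp, 'bc) bnd \<Rightarrow> bool" where
  "le_bnd M (BMsg a) (BMsg b) = le_msg M a b"
| "le_bnd M (BPlain a) (BPlain b) = le_plain M a b"
| "le_bnd M (BCipher a) (BCipher b) = le_cipher M a b"
| "le_bnd M _ _ = False"

fun size_sp :: "('pp, 'sp, 'm, 'p, 'c, 'bm, 'bp, 'bc, 'op) ila \<Rightarrow> 'sp \<Rightarrow>
    ('m, 'p, 'c) val \<Rightarrow> ('bm, 'bp, 'bc) bnd" where
  "size_sp M sp (VMsg m) = BMsg (size_msg M (topub M sp) m)"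
| "size_sp M sp (VPlain p) = BPlain (size_plain M (topub M sp) p)"
| "size_sp M sp (VCipher c) = BCipher (size_cipher M sp c)"

fun size_pp :: "('pp, 'sp, 'm, 'p, 'c, 'bm, 'bp, 'bc, 'op) ila \<Rightarrow> 'pp \<Rightarrow>
    ('m, 'p, 'c) val \<Rightarrow> ('bm, 'bp, 'bc) bnd option" where
  "size_pp M pp (VMsg m) = Some (BMsg (size_msg M pp m))"
| "size_pp M pp (VPlain p) = Some (BPlain (size_plain M pp p))"
| "size_pp M pp (VCipher c) = None"

fun interp_sp :: "('pp, 'sp, 'm, 'p, 'c, 'bm, 'bp, 'bc, 'op) ila \<Rightarrow> 'sp \<Rightarrow>
    ('m, 'p, 'c) val \<Rightarrow> 'm" where
  "interp_sp M sp (VMsg m) = m"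
| "interp_sp M sp (VPlain p) = interp_plain M (topub M sp) p"
| "interp_sp M sp (VCipher c) = interp_cipher M sp c"

text \<open>Structural requirements that are part of the definition of an ILA model:
  each \<open>B_s\<close> is partially ordered, \<open>[[op]]\<close> maps \<open>\<Prod>[[s_i]]\<close> to \<open>[[s]]\<close> and
  \<open>[[op]]^pp_bnd\<close> maps (partially) \<open>\<Prod>B_{s_i}\<close> to \<open>B_s\<close>.\<close>
definition ila_wf :: "('pp, 'sp, 'm, 'p, 'c, 'bm, 'bp, 'bc, 'op) ila \<Rightarrow> bool" where
  "ila_wf M \<longleftrightarrow>
     reflp (le_msg M) \<and> transp (le_msg M) \<and> antisymp (le_msg M) \<and>
     reflp (le_plain M) \<and> transp (le_plain M) \<and> antisymp (le_plain M) \<and>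
     reflp (le_cipher M) \<and> transp (le_cipher M) \<and> antisymp (le_cipher M) \<and>
     (\<forall>op ss s vs. arity M op = (ss, s) \<longrightarrow> list_all2 (\<lambda>v si. sort_of_val v = si) vs ss \<longrightarrow>
        sort_of_val (op_sem M op vs) = s) \<and>
     (\<forall>pp op ss s bs b. arity M op = (ss, s) \<longrightarrow> list_all2 (\<lambda>b si. sort_of_bnd b = si) bs ss \<longrightarrow>
        op_bnd M pp op bs = Some b \<longrightarrow> sort_of_bnd b = s)"

definition ila_commutativity :: "('pp, 'sp, 'm, 'p, 'c, 'bm, 'bp, 'bc, 'op) ila \<Rightarrow> bool" where
  "ila_commutativity M \<longleftrightarrow>
     (\<forall>sp op ss s vs b. arity M op = (ss, s) \<longrightarrow> list_all2 (\<lambda>v si. sort_of_val v = si) vs ss \<longrightarrow>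
        op_bnd M (topub M sp) op (map (size_sp M sp) vs) = Some b \<longrightarrow>
          le_bnd M (size_sp M sp (op_sem M op vs)) b \<and>
          interp_sp M sp (op_sem M op vs) = op_msg M op (map (interp_sp M sp) vs))"

definition ila_downwards_closed :: "('pp, 'sp, 'm, 'p, 'c, 'bm, 'bp, 'bc, 'op) ila \<Rightarrow> bool" where
  "ila_downwards_closed M \<longleftrightarrow>
     (\<forall>sp op ss s bs bs' b. arity M op = (ss, s) \<longrightarrow> list_all2 (\<lambda>b si. sort_of_bnd b = si) bs ss \<longrightarrow>
        op_bnd M (topub M sp) op bs = Some b \<longrightarrow> list_all2 (le_bnd M) bs' bs \<longrightarrow>
        (\<exists>b'. op_bnd M (topub M sp) op bs' = Some b' \<and> le_bnd M b' b))"

definition ila_valid :: "('pp, 'sp, 'm, 'p, 'c, 'bm, 'bp, 'bc, 'op) ila \<Rightarrow> bool" where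
  "ila_valid M \<longleftrightarrow> ila_wf M \<and> ila_commutativity M \<and> ila_downwards_closed M"

datatype ('x, 'm, 'p, 'op) expr =
    Var 'x
  | CMsg 'm
  | CPlain 'p
  | Op 'op "('x, 'm, 'p, 'op) expr list"

inductive eval :: "('pp, 'sp, 'm, 'p, 'c, 'bm, 'bp, 'bc, 'op) ila \<Rightarrow>
    ('x \<Rightarrow> ('m, 'p, 'c) val option) \<Rightarrow> ('x, 'm, 'p, 'op) expr \<Rightarrow> ('m, 'p, 'c) val \<Rightarrow> bool"
  for M where
  eval_var: "\<gamma> x = Some v \<Longrightarrow> eval M \<gamma> (Var x) v"
| eval_msg: "eval M \<gamma> (CMsg m) (VMsg m)"
| eval_plain: "eval M \<gamma> (CPlain p) (VPlain p)"
| eval_op: "arity M op = (ss, s) \<Longrightarrow> list_all2 (eval M \<gamma>) es vs \<Longrightarrow>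
     list_all2 (\<lambda>v si. sort_of_val v = si) vs ss \<Longrightarrow> eval M \<gamma> (Op op es) (op_sem M op vs)"

inductive ceval :: "('pp, 'sp, 'm, 'p, 'c, 'bm, 'bp, 'bc, 'op) ila \<Rightarrow> 'sp \<Rightarrow>
    ('x \<Rightarrow> 'm option) \<Rightarrow> ('x, 'm, 'p, 'op) expr \<Rightarrow> 'm \<Rightarrow> bool"
  for M sp where
  ceval_var: "\<gamma> x = Some m \<Longrightarrow> ceval M sp \<gamma> (Var x) m"
| ceval_msg: "ceval M sp \<gamma> (CMsg m) (interp_sp M sp (VMsg m))"
| ceval_plain: "ceval M sp \<gamma> (CPlain p) (interp_sp M sp (VPlain p))"
| ceval_op: "arity M op = (ss, s) \<Longrightarrow> length es = length ss \<Longrightarrow> list_all2 (ceval M sp \<gamma>) es ms \<Longrightarrow>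
     ceval M sp \<gamma> (Op op es) (op_msg M op ms)"

inductive has_type :: "('pp, 'sp, 'm, 'p, 'c, 'bm, 'bp, 'bc, 'op) ila \<Rightarrow> 'pp \<Rightarrow>
    ('x \<Rightarrow> ('bm, 'bp, 'bc) bnd option) \<Rightarrow> ('x, 'm, 'p, 'op) expr \<Rightarrow> ('bm, 'bp, 'bc) bnd \<Rightarrow> bool"
  for M pp where
  ty_var: "\<Gamma> x = Some \<tau> \<Longrightarrow> has_type M pp \<Gamma> (Var x) \<tau>"
| ty_sub: "has_type M pp \<Gamma> e \<tau> \<Longrightarrow> le_bnd M \<tau> \<tau>' \<Longrightarrow> has_type M pp \<Gamma> e \<tau>'"
| ty_msg: "has_type M pp \<Gamma> (CMsg m) (BMsg (size_msg M pp m))"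
| ty_plain: "has_type M pp \<Gamma> (CPlain p) (BPlain (size_plain M pp p))"
| ty_op: "arity M op = (ss, s) \<Longrightarrow> list_all2 (has_type M pp \<Gamma>) es \<tau>s \<Longrightarrow>
     map sort_of_bnd \<tau>s = ss \<Longrightarrow> op_bnd M pp op \<tau>s = Some \<alpha> \<Longrightarrow> sort_of_bnd \<alpha> = s \<Longrightarrow>
     has_type M pp \<Gamma> (Op op es) \<alpha>"

definition in_sem_type :: "('pp, 'sp, 'm, 'p, 'c, 'bm, 'bp, 'bc, 'op) ila \<Rightarrow> 'sp \<Rightarrow>
    ('bm, 'bp, 'bc) bnd \<Rightarrow> ('m, 'p, 'c) val \<Rightarrow> bool" where
  "in_sem_type M sp \<tau> v \<longleftrightarrow> sort_of_val v = sort_of_bnd \<tau> \<and> le_bnd M (size_sp M sp v) \<tau>"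

definition sem_ctx :: "('pp, 'sp, 'm, 'p, 'c, 'bm, 'bp, 'bc, 'op) ila \<Rightarrow> 'sp \<Rightarrow>
    ('x \<Rightarrow> ('bm, 'bp, 'bc) bnd option) \<Rightarrow> ('x \<Rightarrow> ('m, 'p, 'c) val option) \<Rightarrow> bool" where
  "sem_ctx M sp \<Gamma> \<gamma> \<longleftrightarrow>
     (\<forall>x \<tau>. \<Gamma> x = Some \<tau> \<longrightarrow> (\<exists>v. \<gamma> x = Some v \<and> in_sem_type M sp \<tau> v))"

text \<open>\<open>interp^sp_\<Gamma>(\<gamma>) = {x \<mapsto> interp^sp_{sort(\<Gamma> x)}(\<gamma> x) | x \<in> dom \<Gamma>}\<close>; under
  \<open>sp;\<Gamma> \<Turnstile> \<gamma>\<close> the sort of \<open>\<gamma> x\<close> is \<open>sort(\<Gamma> x)\<close>.\<close>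
definition interp_ctx :: "('pp, 'sp, 'm, 'p, 'c, 'bm, 'bp, 'bc, 'op) ila \<Rightarrow> 'sp \<Rightarrow>
    ('x \<Rightarrow> ('bm, 'bp, 'bc) bnd option) \<Rightarrow> ('x \<Rightarrow> ('m, 'p, 'c) val option) \<Rightarrow> ('x \<Rightarrow> 'm option)" where
  "interp_ctx M sp \<Gamma> \<gamma> = (\<lambda>x. case \<Gamma> x of None \<Rightarrow> None | Some \<tau> \<Rightarrow> map_option (interp_sp M sp) (\<gamma> x))"

end

theory Submission
  imports Defs
begin

lemma list_all2_choice:
  "list_all2 (\<lambda>x y. \<exists>z. Q x y z) xs ys \<Longrightarrow>
   \<exists>zs. length zs = length xs \<and> (\<forall>i<length xs. Q (xs!i) (ys!i) (zs!i))"
proof (induction rule: list_all2_induct)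
  case Nil
  then show ?case by simp
next
  case (Cons x xs y ys)
  then obtain z where z: "Q x y z" by blast
  from Cons obtain zs where "length zs = length xs" "\<forall>i<length xs. Q (xs!i) (ys!i) (zs!i)" by blast
  then show ?case using z
    by (intro exI[of _ "z # zs"]) (auto simp: nth_Cons split: nat.splits)
qed

lemma le_bnd_sort: "le_bnd M a b \<Longrightarrow> sort_of_bnd a = sort_of_bnd b"
  by (cases a; cases b) auto

lemma le_bnd_trans:
  assumes "ila_wf M" "le_bnd M a b" "le_bnd M b c" shows "le_bnd M a c"
  using assms unfolding ila_wf_def
  by (cases a; cases b; cases c) (auto dest: transpD)

lemma le_bnd_refl:
  assumes "ila_wf M" shows "le_bnd M a a"
  using assms unfolding ila_wf_def
  by (cases a) (auto dest: reflpD)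

lemma le_refls:
  assumes "ila_wf M" shows "le_msg M a a" "le_plain M b b"
  using assms unfolding ila_wf_def by (auto dest: reflpD)

lemma size_sp_sort: "sort_of_bnd (size_sp M sp v) = sort_of_val v"
  by (cases v) auto

lemma main_gen:
  assumes val: "ila_valid M"
    and ht: "has_type M pp \<Gamma> e \<tau>"
    and pp: "pp = topub M sp"
    and sc: "sem_ctx M sp \<Gamma> \<gamma>"
  shows "\<exists>v. eval M \<gamma> e v \<and> in_sem_type M sp \<tau> v \<and>
           ceval M sp (interp_ctx M sp \<Gamma> \<gamma>) e (interp_sp M sp v)"
  using ht sc
proof (induction rule: has_type.induct)
  case (ty_var G x \<tau>)
  then obtain v where v: "\<gamma> x = Some v" "in_sem_type M sp \<tau> v" using ty_var.prems unfolding sem_ctx_def by blast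
  have "interp_ctx M sp G \<gamma> x = Some (interp_sp M sp v)"
    using v ty_var unfolding interp_ctx_def by simp
  then show ?case using v by (auto intro: eval.intros ceval.intros)
next
  case (ty_sub G e \<tau> \<tau>')
  have wf: "ila_wf M" using val unfolding ila_valid_def by auto
  then show ?case using ty_sub le_bnd_trans[OF wf] le_bnd_sort unfolding in_sem_type_def by metis
next
  case (ty_msg G m)
  have wf: "ila_wf M" using val unfolding ila_valid_def by auto
  show ?case
    by (rule exI[of _ "VMsg m"]) (auto simp: pp in_sem_type_def le_bnd_refl[OF wf] le_refls[OF wf]
        intro: eval.intros ceval_msg[simplified])
next
  case (ty_plain G p)
  have wf: "ila_wf M" using val unfolding ila_valid_def by auto
  have c: "ceval M sp (interp_ctx M sp G \<gamma>) (CPlain p) (interp_sp M sp (VPlain p))"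
    by (rule ceval_plain)
  show ?case
    using c by (intro exI[of _ "VPlain p"]) (simp add: pp in_sem_type_def le_refls[OF wf] eval.intros)
next
  case (ty_op op ss s G es \<tau>s \<alpha>)
  have ar: "arity M op = (ss, s)" using ty_op by blast
  have IH: "list_all2 (\<lambda>e \<tau>. has_type M pp G e \<tau> \<and> (sem_ctx M sp G \<gamma> \<longrightarrow> (\<exists>v. eval M \<gamma> e v \<and> in_sem_type M sp \<tau> v \<and>
           ceval M sp (interp_ctx M sp G \<gamma>) e (interp_sp M sp v)))) es \<tau>s" using ty_op by blast
  have ms: "map sort_of_bnd \<tau>s = ss" using ty_op by blast
  have ob: "op_bnd M pp op \<tau>s = Some \<alpha>" using ty_op by blast
  have sa: "sort_of_bnd \<alpha> = s" using ty_op by blast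
  have wf: "ila_wf M" and com: "ila_commutativity M" and dc: "ila_downwards_closed M"
    using val unfolding ila_valid_def by auto
  have "list_all2 (\<lambda>e \<tau>. \<exists>v. eval M \<gamma> e v \<and> in_sem_type M sp \<tau> v \<and>
           ceval M sp (interp_ctx M sp G \<gamma>) e (interp_sp M sp v)) es \<tau>s"
    by (rule list_all2_mono[OF IH]) (use ty_op.prems in blast)
  then have "\<exists>vs. length vs = length es \<and> (\<forall>i<length es. eval M \<gamma> (es!i) (vs!i) \<and> in_sem_type M sp (\<tau>s!i) (vs!i) \<and>
           ceval M sp (interp_ctx M sp G \<gamma>) (es!i) (interp_sp M sp (vs!i)))"
    by (rule list_all2_choice[where Q="\<lambda>e \<tau> v. eval M \<gamma> e v \<and> in_sem_type M sp \<tau> v \<and>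
           ceval M sp (interp_ctx M sp G \<gamma>) e (interp_sp M sp v)"])
  then obtain vs where vs: "length vs = length es"
    "\<forall>i<length es. eval M \<gamma> (es!i) (vs!i) \<and> in_sem_type M sp (\<tau>s!i) (vs!i) \<and>
           ceval M sp (interp_ctx M sp G \<gamma>) (es!i) (interp_sp M sp (vs!i))" by (elim exE conjE)
  have len: "length \<tau>s = length es" using list_all2_lengthD[OF IH] by simp
  have lss: "length ss = length es" using len ms by auto
  have ev: "list_all2 (eval M \<gamma>) es vs" using vs by (simp add: list_all2_conv_all_nth)
  have srt: "list_all2 (\<lambda>v si. sort_of_val v = si) vs ss"
    using vs len lss ms by (auto simp: list_all2_conv_all_nth in_sem_type_def)
  have ce: "list_all2 (ceval M sp (interp_ctx M sp G \<gamma>)) es (map (interp_sp M sp) vs)"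
    using vs by (simp add: list_all2_conv_all_nth)
  have tsrt: "list_all2 (\<lambda>b si. sort_of_bnd b = si) \<tau>s ss"
    using ms len by (auto simp: list_all2_conv_all_nth)
  have le: "list_all2 (le_bnd M) (map (size_sp M sp) vs) \<tau>s"
    using vs len by (auto simp: list_all2_conv_all_nth in_sem_type_def)
  obtain b' where b': "op_bnd M (topub M sp) op (map (size_sp M sp) vs) = Some b'" "le_bnd M b' \<alpha>"
  proof -
    have "\<forall>sp op ss s bs bs' b. arity M op = (ss, s) \<longrightarrow> list_all2 (\<lambda>b si. sort_of_bnd b = si) bs ss \<longrightarrow>
        op_bnd M (topub M sp) op bs = Some b \<longrightarrow> list_all2 (le_bnd M) bs' bs \<longrightarrow>
        (\<exists>b'. op_bnd M (topub M sp) op bs' = Some b' \<and> le_bnd M b' b)"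
      using dc unfolding ila_downwards_closed_def .
    from this[rule_format, OF ar tsrt ob[unfolded pp] le] show ?thesis using that by blast
  qed
  have c1: "le_bnd M (size_sp M sp (op_sem M op vs)) b'"
    and c2: "interp_sp M sp (op_sem M op vs) = op_msg M op (map (interp_sp M sp) vs)"
  proof -
    have "\<forall>sp op ss s vs b. arity M op = (ss, s) \<longrightarrow> list_all2 (\<lambda>v si. sort_of_val v = si) vs ss \<longrightarrow>
        op_bnd M (topub M sp) op (map (size_sp M sp) vs) = Some b \<longrightarrow>
          le_bnd M (size_sp M sp (op_sem M op vs)) b \<and>
          interp_sp M sp (op_sem M op vs) = op_msg M op (map (interp_sp M sp) vs)"
      using com unfolding ila_commutativity_def .
    note h = this[rule_format, OF ar srt b'(1)]
    show "le_bnd M (size_sp M sp (op_sem M op vs)) b'" using h by (rule conjunct1)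
    show "interp_sp M sp (op_sem M op vs) = op_msg M op (map (interp_sp M sp) vs)" using h by (rule conjunct2)
  qed
  have sv: "sort_of_val (op_sem M op vs) = s"
  proof -
    have "\<forall>op ss s vs. arity M op = (ss, s) \<longrightarrow> list_all2 (\<lambda>v si. sort_of_val v = si) vs ss \<longrightarrow>
        sort_of_val (op_sem M op vs) = s" using wf unfolding ila_wf_def by blast
    from this[rule_format, OF ar srt] show ?thesis .
  qed
  have e1: "eval M \<gamma> (Op op es) (op_sem M op vs)" by (rule eval_op[OF ar ev srt])
  have e2: "ceval M sp (interp_ctx M sp G \<gamma>) (Op op es) (interp_sp M sp (op_sem M op vs))"
    unfolding c2 by (rule ceval_op[OF ar lss[symmetric] ce])
  have "in_sem_type M sp \<alpha> (op_sem M op vs)"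
    unfolding in_sem_type_def using sv sa le_bnd_trans[OF wf c1 b'(2)] by simp
  then show ?case using e1 e2 by blast
qed

theorem mainTheorem3:
  fixes M :: "('pp, 'sp, 'm, 'p, 'c, 'bm, 'bp, 'bc, 'op) ila"
    and sp :: 'sp
    and \<Gamma> :: "'x \<Rightarrow> ('bm, 'bp, 'bc) bnd option"
    and \<gamma> :: "'x \<Rightarrow> ('m, 'p, 'c) val option"
    and e :: "('x, 'm, 'p, 'op) expr"
    and \<tau> :: "('bm, 'bp, 'bc) bnd"
  assumes "ila_valid M"
    and "has_type M (topub M sp) \<Gamma> e \<tau>"
    and "sem_ctx M sp \<Gamma> \<gamma>"
  shows "\<exists>v v_msg. eval M \<gamma> e v \<and> ceval M sp (interp_ctx M sp \<Gamma> \<gamma>) e v_msg \<and>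
           interp_sp M sp v = v_msg"
  using main_gen[OF assms(1,2) refl assms(3)] by blast

end
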